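(* Let $x,y\in S_n$ and let $M$ be the $2\times n$ matrix with rows $x$ and $y$. Suppose every column of $M$ is one of $(1,1)^T,(1,-1)^T,(1,0)^T,(0,1)^T,(0,0)^T$, occurring $a_1,a_2,b_1,b_2,c$ times respectively ($a_1+a_2+b_1+b_2+c=n$). Then $$|\mathrm{Elim}(\{x\})\cap\mathrm{Elim}(\{y\})|=3^c\big(2^{b_1+b_2}(2^{a_1}+2^{a_2})-2^{b_1+1}-2^{b_2+1}+2\big)$$ and $$|\mathrm{Elim}(\{x,y\})|=3^c\big(3^{b_1}2^{a_1+a_2+b_2}+3^{b_2}2^{a_1+a_2+b_1}-2^{b_1+b_2}(2^{a_1}+2^{a_2})-3^{b_1}-3^{b_2}+2^{b_1+1}+2^{b_2+1}-2\big).$$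
   Context: $S_n$ is the set of all nonzero $n$-tuples in $\{-1,0,1\}^n$ whose first nonzero entry equals $1$. A tuple $t=(t_1,\dots,t_n)\in\{1,0,-1,u\}^n$ ($u$ a formal symbol) eliminates $s\in S_n$ if: (i) $t_i\neq0$ and $s_i\neq0$ for some $i$; (ii) there is $k\in\{+1,-1\}$ with $t_i=ks_i$ for all $i$ with $s_i\neq0$ and $t_i\neq0$; (iii) $s_i=0$ whenever $t_i=u$. For $X\subseteq S_n$, $\mathrm{Elim}(X)$ is the set of elements of $S_n$ eliminated by at least one element of $X$. *)

theory Defs
  imports Main
begin

text \<open>Entries of a general eliminating tuple: an integer value or the formal symbol u.\<close>
datatype entry = Num int | U

definition S :: "nat \<Rightarrow> int list set" where
  "S n = {s. length s = n \<and> set s \<subseteq> {-1, 0, 1} \<and>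
             (\<exists>i<n. s ! i = 1 \<and> (\<forall>j<i. s ! j = 0))}"

definition eliminates :: "entry list \<Rightarrow> int list \<Rightarrow> bool" where
  "eliminates t s \<longleftrightarrow> length t = length s \<and>
     (\<exists>i<length s. t ! i \<noteq> Num 0 \<and> s ! i \<noteq> 0) \<and>
     (\<exists>k\<in>{1, -1::int}. \<forall>i<length s. s ! i \<noteq> 0 \<and> t ! i \<noteq> Num 0 \<longrightarrow> t ! i = Num (k * s ! i)) \<and>
     (\<forall>i<length s. t ! i = U \<longrightarrow> s ! i = 0)"

definition Elim :: "nat \<Rightarrow> int list set \<Rightarrow> int list set" where
  "Elim n X = {s \<in> S n. \<exists>x\<in>X. eliminates (map Num x) s}"

end

theory Submission
  imports Defs
begin

definition T :: "nat \<Rightarrow> int list set" where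
  "T n = {s. set s \<subseteq> {-1,0,1} \<and> length s = n}"

lemma finite_T: "finite (T n)"
  unfolding T_def by (rule finite_lists_length_eq) simp

lemma sum_prod_T:
  fixes f :: "nat \<Rightarrow> int \<Rightarrow> int"
  shows "(\<Sum>s\<in>T n. \<Prod>i<n. f i (s!i)) = (\<Prod>i<n. \<Sum>v\<in>{-1,0,1}. f i v)"
proof (induction n arbitrary: f)
  case 0
  have "T 0 = {[]}" unfolding T_def by auto
  then show ?case by simp
next
  case (Suc n)
  have eq: "T (Suc n) = (\<lambda>(xs, v). v#xs) ` (T n \<times> {-1,0,1})"
    unfolding T_def by (rule lists_length_Suc_eq)
  have inj: "inj_on (\<lambda>(xs, v). v#xs) (T n \<times> {-1,0,1})"
    by (auto simp: inj_on_def)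
  have "(\<Sum>s\<in>T (Suc n). \<Prod>i<Suc n. f i (s!i))
      = (\<Sum>p\<in>T n \<times> {-1,0,1}. \<Prod>i<Suc n. f i ((snd p # fst p)!i))"
    unfolding eq by (subst sum.reindex[OF inj]) (simp add: case_prod_beta)
  also have "\<dots> = (\<Sum>p\<in>T n \<times> {-1,0,1}. f 0 (snd p) * (\<Prod>i<n. f (Suc i) (fst p ! i)))"
    by (simp only: prod.lessThan_Suc_shift nth_Cons_0 nth_Cons_Suc)
  also have "\<dots> = (\<Sum>xs\<in>T n. \<Sum>v\<in>{-1,0,1}. f 0 v * (\<Prod>i<n. f (Suc i) (xs ! i)))"
    by (simp only: sum.cartesian_product split_def)
  also have "\<dots> = (\<Sum>v\<in>{-1,0,1}. f 0 v) * (\<Sum>xs\<in>T n. (\<Prod>i<n. f (Suc i) (xs ! i)))"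
    by (simp add: sum_distrib_left sum_distrib_right[symmetric] del: sum.insert)
  also have "\<dots> = (\<Sum>v\<in>{-1,0,1}. f 0 v) * (\<Prod>i<n. \<Sum>v\<in>{-1,0,1}. f (Suc i) v)"
    using Suc.IH[of "\<lambda>i. f (Suc i)"] by simp
  also have "\<dots> = (\<Prod>i<Suc n. \<Sum>v\<in>{-1,0,1}. f i v)"
    by (simp only: prod.lessThan_Suc_shift)
  finally show ?case .
qed

lemma prod_cols:
  fixes g :: "'c \<Rightarrow> int" and n :: nat
  assumes "finite C" "\<forall>i<n. h i \<in> C"
  shows "(\<Prod>i<n. g (h i)) = (\<Prod>c\<in>C. g c ^ card {i. i < n \<and> h i = c})"
  using assms(2)
proof (induction n)
  case 0
  then show ?case by simp
next
  case (Suc n)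
  have cs: "card {i. i < Suc n \<and> h i = c} = card {i. i < n \<and> h i = c} + (if h n = c then 1 else 0)" for c
  proof -
    have "{i. i < Suc n \<and> h i = c} = {i. i < n \<and> h i = c} \<union> (if h n = c then {n} else {})"
      by (auto simp: less_Suc_eq)
    then show ?thesis by (simp add: card_insert_if)
  qed
  have "(\<Prod>c\<in>C. g c ^ card {i. i < Suc n \<and> h i = c})
      = (\<Prod>c\<in>C. g c ^ card {i. i < n \<and> h i = c}) * (\<Prod>c\<in>C. g c ^ (if h n = c then 1 else 0))"
    by (simp add: cs power_add prod.distrib)
  also have "(\<Prod>c\<in>C. g c ^ (if h n = c then 1 else 0)) = (\<Prod>c\<in>C. if h n = c then g c else 1)"
    by (rule prod.cong) auto
  also have "\<dots> = g (h n)" using Suc.prems assms(1) by (simp add: prod.delta)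
  finally show ?case using Suc by simp
qed

lemma S_sub_T: "S n \<subseteq> T n"
  unfolding S_def T_def by auto

lemma neg_T: "s \<in> T n \<Longrightarrow> map uminus s \<in> T n"
  unfolding T_def by auto

lemma T_S_or_neg:
  assumes "s \<in> T n" "i < n" "s ! i \<noteq> 0"
  shows "s \<in> S n \<or> map uminus s \<in> S n"
proof -
  have "\<exists>j. j < n \<and> s ! j \<noteq> 0" using assms(2,3) by blast
  then obtain j where j0: "j < n \<and> s ! j \<noteq> 0" "\<forall>m<j. \<not> (m < n \<and> s ! m \<noteq> 0)"
    unfolding exists_least_iff[of "\<lambda>j. j < n \<and> s ! j \<noteq> 0"] by blast
  have j: "j < n" "s ! j \<noteq> 0" "\<forall>m<j. s ! m = 0" using j0 by auto
  have len: "length s = n" and sub: "set s \<subseteq> {-1,0,1}" using assms(1) by (auto simp: T_def)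
  have "s ! j \<in> {-1,0,1}" using sub j(1) len nth_mem by blast
  with j(2) have "s ! j = 1 \<or> s ! j = -1" by auto
  then show ?thesis
  proof
    assume "s ! j = 1" then show ?thesis using j len sub unfolding S_def by blast
  next
    assume h: "s ! j = -1"
    have "map uminus s ! j = 1" using h j(1) len by simp
    moreover have "\<forall>m<j. map uminus s ! m = 0" using j len by simp
    moreover have "set (map uminus s) \<subseteq> {-1,0,1}" using sub by auto
    ultimately show ?thesis using j(1) len unfolding S_def by auto
  qed
qed

lemma S_not_both:
  assumes "s \<in> S n" "map uminus s \<in> S n"
  shows False
proof -
  have len: "length s = n" using assms(1) by (simp add: S_def)
  obtain i where i: "i < n" "s ! i = 1" "\<forall>j<i. s ! j = 0" using assms(1) by (auto simp: S_def)
  obtain k where k: "k < n" "map uminus s ! k = 1" "\<forall>j<k. map uminus s ! j = 0"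
    using assms(2) by (auto simp: S_def)
  have k': "s ! k = -1" "\<forall>j<k. s ! j = 0" using k len by auto
  show False
  proof (cases i k rule: linorder_cases)
    case less then show ?thesis using k' i by auto
  next
    case equal then show ?thesis using k' i by auto
  next
    case greater then show ?thesis using k' i by auto
  qed
qed

lemma halve:
  assumes inv: "\<forall>s\<in>T n. \<Phi> (map uminus s) = \<Phi> s"
    and nz: "\<forall>s\<in>T n. \<Phi> s \<longrightarrow> (\<exists>i<n. s ! i \<noteq> 0)"
  shows "card {s\<in>T n. \<Phi> s} = 2 * card {s\<in>S n. \<Phi> s}"
proof -
  let ?A = "{s\<in>S n. \<Phi> s}"
  have fin: "finite ?A" using finite_subset[OF S_sub_T finite_T] by auto
  have inj: "inj_on (map uminus) X" for X :: "int list set"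
    by (rule inj_onI) (drule arg_cong[where f="map uminus"], simp add: comp_def)
  have eq: "{s\<in>T n. \<Phi> s} = ?A \<union> map uminus ` ?A"
  proof (rule set_eqI, rule iffI)
    fix s assume "s \<in> {s\<in>T n. \<Phi> s}"
    then have s: "s \<in> T n" "\<Phi> s" by auto
    then obtain i where "i < n" "s ! i \<noteq> 0" using nz by blast
    then have "s \<in> S n \<or> map uminus s \<in> S n" using T_S_or_neg s by blast
    moreover have "\<Phi> (map uminus s)" using inv s by auto
    moreover have "s = map uminus (map uminus s)" by (simp add: comp_def)
    ultimately show "s \<in> ?A \<union> map uminus ` ?A" using s by blast
  next
    fix s assume "s \<in> ?A \<union> map uminus ` ?A"
    then show "s \<in> {s\<in>T n. \<Phi> s}"
    proof
      assume "s \<in> ?A" then show ?thesis using S_sub_T by auto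
    next
      assume "s \<in> map uminus ` ?A"
      then obtain t where t: "t \<in> S n" "\<Phi> t" "s = map uminus t" by auto
      have "t \<in> T n" using t S_sub_T by auto
      then show ?thesis using t inv neg_T by auto
    qed
  qed
  have disj: "?A \<inter> map uminus ` ?A = {}"
  proof (rule ccontr)
    assume "?A \<inter> map uminus ` ?A \<noteq> {}"
    then obtain t where t: "t \<in> S n" "map uminus t \<in> S n" by auto
    have "map uminus (map uminus t) = t" by (simp add: comp_def)
    then show False using S_not_both[OF t(2)] t(1) by simp
  qed
  have "card {s\<in>T n. \<Phi> s} = card ?A + card (map uminus ` ?A)"
    unfolding eq by (rule card_Un_disjoint) (use fin disj in auto)
  also have "card (map uminus ` ?A) = card ?A" by (rule card_image[OF inj])
  finally show ?thesis by simp
qed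


definition ip :: "int \<Rightarrow> int \<Rightarrow> int" where
  "ip a v = (if a \<noteq> 0 \<and> v \<noteq> 0 \<and> v \<noteq> a then 0 else 1)"
definition im :: "int \<Rightarrow> int \<Rightarrow> int" where
  "im a v = (if a \<noteq> 0 \<and> v \<noteq> 0 \<and> v \<noteq> -a then 0 else 1)"
definition iz :: "int \<Rightarrow> int \<Rightarrow> int" where
  "iz a v = (if a \<noteq> 0 \<and> v \<noteq> 0 then 0 else 1)"

lemma prod01: "(\<Prod>i<(n::nat). if Q i then 0 else 1::int) = (if \<exists>i<n. Q i then 0 else 1)"
  by (induction n) (auto simp: less_Suc_eq)

lemma elim_ind:
  assumes s: "s \<in> T n" and lx: "length x = n" and sx: "set x \<subseteq> {-1,0,1}"
  shows "(if eliminates (map Num x) s then 1 else 0 :: int) =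
    (\<Prod>i<n. ip (x!i) (s!i)) + (\<Prod>i<n. im (x!i) (s!i)) - 2 * (\<Prod>i<n. iz (x!i) (s!i))"
proof -
  have ls: "length s = n" and ss: "set s \<subseteq> {-1,0,1}" using s by (auto simp: T_def)
  have xv: "x ! i \<in> {-1,0,1}" if "i < n" for i using sx lx that nth_mem by blast
  have sv: "s ! i \<in> {-1,0,1}" if "i < n" for i using ss ls that nth_mem by blast
  define P where "P = (\<forall>i<n. \<not> (x!i \<noteq> 0 \<and> s!i \<noteq> 0 \<and> s!i \<noteq> x!i))"
  define M where "M = (\<forall>i<n. \<not> (x!i \<noteq> 0 \<and> s!i \<noteq> 0 \<and> s!i \<noteq> -x!i))"
  define Z where "Z = (\<forall>i<n. \<not> (x!i \<noteq> 0 \<and> s!i \<noteq> 0))"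
  have pP: "(\<Prod>i<n. ip (x!i) (s!i)) = (if P then 1 else 0)"
    unfolding ip_def P_def prod01 by auto
  have pM: "(\<Prod>i<n. im (x!i) (s!i)) = (if M then 1 else 0)"
    unfolding im_def M_def prod01 by auto
  have pZ: "(\<Prod>i<n. iz (x!i) (s!i)) = (if Z then 1 else 0)"
    unfolding iz_def Z_def prod01 by auto
  have ZPM: "Z \<longleftrightarrow> P \<and> M"
  proof
    assume "P \<and> M" then show Z unfolding P_def M_def Z_def
      by (metis add.inverse_inverse add.inverse_neutral neg_equal_zero)
  qed (auto simp: P_def M_def Z_def)
  have E: "eliminates (map Num x) s \<longleftrightarrow> (P \<or> M) \<and> \<not> Z"
  proof -
    have "(\<exists>k\<in>{1, -1::int}. \<forall>i<length s. s ! i \<noteq> 0 \<and> map Num x ! i \<noteq> Num 0 \<longrightarrow> map Num x ! i = Num (k * s ! i))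
       \<longleftrightarrow> P \<or> M"
    proof -
      have a: "(\<forall>i<n. s ! i \<noteq> 0 \<and> x ! i \<noteq> 0 \<longrightarrow> x ! i = s ! i) \<longleftrightarrow> P"
        unfolding P_def by auto
      have b: "(\<forall>i<n. s ! i \<noteq> 0 \<and> x ! i \<noteq> 0 \<longrightarrow> x ! i = - s ! i) \<longleftrightarrow> M"
        unfolding M_def by auto
      show ?thesis using a b ls lx by auto
    qed
    moreover have "(\<exists>i<length s. map Num x ! i \<noteq> Num 0 \<and> s ! i \<noteq> 0) \<longleftrightarrow> \<not> Z"
      unfolding Z_def using ls lx by auto
    moreover have "\<forall>i<length s. map Num x ! i \<noteq> U" using ls lx by auto
    ultimately show ?thesis unfolding eliminates_def using ls lx by auto
  qed
  show ?thesis unfolding pP pM pZ E using ZPM by auto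
qed


definition H :: "(int \<Rightarrow> int \<Rightarrow> int) \<Rightarrow> (int \<Rightarrow> int \<Rightarrow> int) \<Rightarrow> int \<Rightarrow> int \<Rightarrow> int" where
  "H f g a b = (\<Sum>v\<in>{-1,0,1}. f a v * g b v)"

lemma pairsum:
  fixes f g :: "int \<Rightarrow> int \<Rightarrow> int" and n :: nat
  assumes cols: "\<forall>i<n. (x ! i, y ! i) \<in> {(1, 1), (1, -1), (1, 0), (0, 1), (0, 0)}"
  shows "(\<Sum>s\<in>T n. (\<Prod>i<n. f (x!i) (s!i)) * (\<Prod>i<n. g (y!i) (s!i))) =
    H f g 1 1 ^ card {i. i < n \<and> x ! i = 1 \<and> y ! i = 1} *
    H f g 1 (-1) ^ card {i. i < n \<and> x ! i = 1 \<and> y ! i = -1} *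
    H f g 1 0 ^ card {i. i < n \<and> x ! i = 1 \<and> y ! i = 0} *
    H f g 0 1 ^ card {i. i < n \<and> x ! i = 0 \<and> y ! i = 1} *
    H f g 0 0 ^ card {i. i < n \<and> x ! i = 0 \<and> y ! i = 0}"
proof -
  have "(\<Sum>s\<in>T n. (\<Prod>i<n. f (x!i) (s!i)) * (\<Prod>i<n. g (y!i) (s!i)))
      = (\<Sum>s\<in>T n. \<Prod>i<n. f (x!i) (s!i) * g (y!i) (s!i))"
    by (simp add: prod.distrib)
  also have "\<dots> = (\<Prod>i<n. \<Sum>v\<in>{-1,0,1}. f (x!i) v * g (y!i) v)"
    by (rule sum_prod_T)
  also have "\<dots> = (\<Prod>i<n. (\<lambda>c. H f g (fst c) (snd c)) (x!i, y!i))"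
    by (simp only: H_def fst_conv snd_conv)
  also have "\<dots> = (\<Prod>c\<in>{(1, 1), (1, -1), (1, 0), (0, 1), (0, 0)}.
        H f g (fst c) (snd c) ^ card {i. i < n \<and> (x!i, y!i) = c})"
    by (rule prod_cols) (use cols in auto)
  finally show ?thesis by (simp add: mult.assoc)
qed


lemma elim_neg: "eliminates t (map uminus s) \<longleftrightarrow> eliminates t s"
proof -
  have *: "eliminates t (map uminus s)" if "eliminates t s" for s
  proof -
    from that obtain k where k: "k \<in> {1, -1::int}"
      "\<forall>i<length s. s ! i \<noteq> 0 \<and> t ! i \<noteq> Num 0 \<longrightarrow> t ! i = Num (k * s ! i)"
      unfolding eliminates_def by blast
    have k1: "-k \<in> {1, -1::int}" using k(1) by auto
    have k2: "\<forall>i<length (map uminus s). map uminus s ! i \<noteq> 0 \<and> t ! i \<noteq> Num 0 \<longrightarrow> t ! i = Num (-k * map uminus s ! i)"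
      using k(2) by simp
    have c1: "length t = length (map uminus s)" using that unfolding eliminates_def by simp
    have c2: "\<exists>i<length (map uminus s). t ! i \<noteq> Num 0 \<and> map uminus s ! i \<noteq> 0"
      using that unfolding eliminates_def by fastforce
    have c4: "\<forall>i<length (map uminus s). t ! i = U \<longrightarrow> map uminus s ! i = 0"
      using that unfolding eliminates_def by simp
    show ?thesis unfolding eliminates_def using c1 c2 c4 k1 k2 by blast
  qed
  have "map uminus (map uminus s) = s" by (simp add: comp_def)
  then show ?thesis using *[of s] *[of "map uminus s"] by auto
qed

lemma card_sum_if: "finite A \<Longrightarrow> int (card {s\<in>A. P s}) = (\<Sum>s\<in>A. if P s then 1 else 0)"
proof -
  assume f: "finite A"
  have "int (card {s\<in>A. P s}) = (\<Sum>s\<in>{s\<in>A. P s}. 1)" by simp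
  also have "\<dots> = (\<Sum>s\<in>A. if P s then 1 else 0)" by (rule sum.inter_filter[OF f])
  finally show ?thesis .
qed

definition one :: "int \<Rightarrow> int \<Rightarrow> int" where "one a v = 1"

definition ex :: "nat \<Rightarrow> int list \<Rightarrow> int list \<Rightarrow> int" where
  "ex n x s = (\<Prod>i<n. ip (x!i) (s!i)) + (\<Prod>i<n. im (x!i) (s!i)) - 2 * (\<Prod>i<n. iz (x!i) (s!i))"

lemma prod_one: "(\<Prod>i<n. one (y!i) (s!i)) = 1" by (simp add: one_def)

theorem mainTheorem14:
  fixes n a1 a2 b1 b2 c :: nat and x y :: "int list"
  assumes "x \<in> S n" and "y \<in> S n"
    and "\<forall>i<n. (x ! i, y ! i) \<in> {(1, 1), (1, -1), (1, 0), (0, 1), (0, 0)}"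
    and "a1 = card {i. i < n \<and> x ! i = 1 \<and> y ! i = 1}"
    and "a2 = card {i. i < n \<and> x ! i = 1 \<and> y ! i = -1}"
    and "b1 = card {i. i < n \<and> x ! i = 1 \<and> y ! i = 0}"
    and "b2 = card {i. i < n \<and> x ! i = 0 \<and> y ! i = 1}"
    and "c = card {i. i < n \<and> x ! i = 0 \<and> y ! i = 0}"
  shows "int (card (Elim n {x} \<inter> Elim n {y})) =
           3 ^ c * (2 ^ (b1 + b2) * (2 ^ a1 + 2 ^ a2) - 2 ^ (b1 + 1) - 2 ^ (b2 + 1) + 2)
         \<and> int (card (Elim n {x, y})) =
           3 ^ c * (3 ^ b1 * 2 ^ (a1 + a2 + b2) + 3 ^ b2 * 2 ^ (a1 + a2 + b1)
                    - 2 ^ (b1 + b2) * (2 ^ a1 + 2 ^ a2) - 3 ^ b1 - 3 ^ b2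
                    + 2 ^ (b1 + 1) + 2 ^ (b2 + 1) - 2)"
proof -
  note cols = assms(3)
  have lx: "length x = n" "set x \<subseteq> {-1,0,1}" and ly: "length y = n" "set y \<subseteq> {-1,0,1}"
    using assms(1,2) by (auto simp: S_def)
  define Ex where "Ex s = eliminates (map Num x) s" for s
  define Ey where "Ey s = eliminates (map Num y) s" for s
  have indx: "(if Ex s then 1 else 0) = ex n x s" if "s \<in> T n" for s
    unfolding Ex_def ex_def using elim_ind[OF that lx] .
  have indy: "(if Ey s then 1 else 0) = ex n y s" if "s \<in> T n" for s
    unfolding Ey_def ex_def using elim_ind[OF that ly] .
  have nzx: "Ex s \<Longrightarrow> \<exists>i<n. s ! i \<noteq> 0" if "s \<in> T n" for s
    using that unfolding Ex_def eliminates_def T_def by auto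
  have nzy: "Ey s \<Longrightarrow> \<exists>i<n. s ! i \<noteq> 0" if "s \<in> T n" for s
    using that unfolding Ey_def eliminates_def T_def by auto
  have ix: "Ex (map uminus s) = Ex s" for s unfolding Ex_def by (rule elim_neg)
  have iy: "Ey (map uminus s) = Ey s" for s unfolding Ey_def by (rule elim_neg)
  have e1: "Elim n {x} \<inter> Elim n {y} = {s\<in>S n. Ex s \<and> Ey s}"
    unfolding Elim_def Ex_def Ey_def by auto
  have e2: "Elim n {x, y} = {s\<in>S n. Ex s \<or> Ey s}"
    unfolding Elim_def Ex_def Ey_def by auto
  have h1: "card {s\<in>T n. Ex s \<and> Ey s} = 2 * card {s\<in>S n. Ex s \<and> Ey s}"
    by (rule halve) (use ix iy nzx in auto)
  have h2: "card {s\<in>T n. Ex s \<or> Ey s} = 2 * card {s\<in>S n. Ex s \<or> Ey s}"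
    by (rule halve) (use ix iy nzx nzy in auto)
  have s1: "int (card {s\<in>T n. Ex s \<and> Ey s}) = (\<Sum>s\<in>T n. ex n x s * ex n y s)"
    unfolding card_sum_if[OF finite_T] by (rule sum.cong) (auto simp: indx[symmetric] indy[symmetric])
  have s2: "int (card {s\<in>T n. Ex s \<or> Ey s}) = (\<Sum>s\<in>T n. ex n x s + ex n y s - ex n x s * ex n y s)"
    unfolding card_sum_if[OF finite_T] by (rule sum.cong) (auto simp: indx[symmetric] indy[symmetric])
  define Q where "Q f g = (\<Sum>s\<in>T n. (\<Prod>i<n. f (x!i) (s!i)) * (\<Prod>i<n. g (y!i) (s!i)))"
    for f g :: "int \<Rightarrow> int \<Rightarrow> int"
  define Qt where "Qt f g s = (\<Prod>i<n. f (x!i) (s!i)) * (\<Prod>i<n. g (y!i) (s!i))"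
    for f g :: "int \<Rightarrow> int \<Rightarrow> int" and s
  have QQ: "Q f g = (\<Sum>s\<in>T n. Qt f g s)" for f g unfolding Q_def Qt_def ..
  have pxy: "ex n x s * ex n y s = Qt ip ip s + Qt ip im s + Qt im ip s + Qt im im s
      - 2 * Qt ip iz s - 2 * Qt im iz s - 2 * Qt iz ip s - 2 * Qt iz im s + 4 * Qt iz iz s" for s
    unfolding ex_def Qt_def by (simp add: algebra_simps)
  have px: "ex n x s = Qt ip one s + Qt im one s - 2 * Qt iz one s" for s
    unfolding ex_def Qt_def prod_one by simp
  have py: "ex n y s = Qt one ip s + Qt one im s - 2 * Qt one iz s" for s
    unfolding ex_def Qt_def prod_one by simp
  have S1: "(\<Sum>s\<in>T n. ex n x s * ex n y s) = Q ip ip + Q ip im + Q im ip + Q im im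
      - 2 * Q ip iz - 2 * Q im iz - 2 * Q iz ip - 2 * Q iz im + 4 * Q iz iz"
    unfolding pxy QQ by (simp only: sum.distrib sum_subtractf sum_distrib_left)
  have S2: "(\<Sum>s\<in>T n. ex n x s + ex n y s - ex n x s * ex n y s) =
      (Q ip one + Q im one - 2 * Q iz one) + (Q one ip + Q one im - 2 * Q one iz) -
      (Q ip ip + Q ip im + Q im ip + Q im im
      - 2 * Q ip iz - 2 * Q im iz - 2 * Q iz ip - 2 * Q iz im + 4 * Q iz iz)"
    unfolding pxy unfolding px py QQ by (simp only: sum.distrib sum_subtractf sum_distrib_left)
  have QF: "Q f g = H f g 1 1 ^ a1 * H f g 1 (-1) ^ a2 * H f g 1 0 ^ b1 * H f g 0 1 ^ b2 * H f g 0 0 ^ c" for f g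
    unfolding Q_def using pairsum[OF cols, of f g] assms(4-8) by simp
  note Hd = QF H_def ip_def im_def iz_def one_def
  have v1: "Q ip ip = 2^a1 * 2^b1 * 2^b2 * 3^c" "Q im im = 2^a1 * 2^b1 * 2^b2 * 3^c"
    "Q ip im = 2^a2 * 2^b1 * 2^b2 * 3^c" "Q im ip = 2^a2 * 2^b1 * 2^b2 * 3^c"
    "Q ip iz = 2^b1 * 3^c" "Q im iz = 2^b1 * 3^c" "Q iz ip = 2^b2 * 3^c" "Q iz im = 2^b2 * 3^c"
    "Q iz iz = 3^c"
    by (simp_all add: Hd mult_ac)
  have v2: "Q ip one = 2^a1 * 2^a2 * 2^b1 * 3^b2 * 3^c" "Q im one = 2^a1 * 2^a2 * 2^b1 * 3^b2 * 3^c"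
    "Q iz one = 3^b2 * 3^c"
    "Q one ip = 2^a1 * 2^a2 * 2^b2 * 3^b1 * 3^c" "Q one im = 2^a1 * 2^a2 * 2^b2 * 3^b1 * 3^c"
    "Q one iz = 3^b1 * 3^c"
    by (simp_all add: Hd mult_ac)
  note Hs = v1 v2
  have I: "2 * int (card (Elim n {x} \<inter> Elim n {y})) =
     2 * (3 ^ c * (2 ^ (b1 + b2) * (2 ^ a1 + 2 ^ a2) - 2 ^ (b1 + 1) - 2 ^ (b2 + 1) + 2))"
  proof -
    have "2 * int (card (Elim n {x} \<inter> Elim n {y})) = int (card {s\<in>T n. Ex s \<and> Ey s})"
      unfolding e1 h1 by simp
    also have "\<dots> = Q ip ip + Q ip im + Q im ip + Q im im
      - 2 * Q ip iz - 2 * Q im iz - 2 * Q iz ip - 2 * Q iz im + 4 * Q iz iz"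
      using s1 S1 by simp
    also have "\<dots> = 2 * (3 ^ c * (2 ^ (b1 + b2) * (2 ^ a1 + 2 ^ a2) - 2 ^ (b1 + 1) - 2 ^ (b2 + 1) + 2))"
      by (simp add: Hs power_add algebra_simps)
    finally show ?thesis .
  qed
  have U: "2 * int (card (Elim n {x, y})) =
     2 * (3 ^ c * (3 ^ b1 * 2 ^ (a1 + a2 + b2) + 3 ^ b2 * 2 ^ (a1 + a2 + b1)
                    - 2 ^ (b1 + b2) * (2 ^ a1 + 2 ^ a2) - 3 ^ b1 - 3 ^ b2
                    + 2 ^ (b1 + 1) + 2 ^ (b2 + 1) - 2))"
  proof -
    have "2 * int (card (Elim n {x, y})) = int (card {s\<in>T n. Ex s \<or> Ey s})"
      unfolding e2 h2 by simp
    also have "\<dots> = (Q ip one + Q im one - 2 * Q iz one) + (Q one ip + Q one im - 2 * Q one iz) -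
      (Q ip ip + Q ip im + Q im ip + Q im im
      - 2 * Q ip iz - 2 * Q im iz - 2 * Q iz ip - 2 * Q iz im + 4 * Q iz iz)"
      using s2 S2 by simp
    also have "\<dots> = 2 * (3 ^ c * (3 ^ b1 * 2 ^ (a1 + a2 + b2) + 3 ^ b2 * 2 ^ (a1 + a2 + b1)
                    - 2 ^ (b1 + b2) * (2 ^ a1 + 2 ^ a2) - 3 ^ b1 - 3 ^ b2
                    + 2 ^ (b1 + 1) + 2 ^ (b2 + 1) - 2))"
      by (simp add: Hs power_add algebra_simps)
    finally show ?thesis .
  qed
  show ?thesis using I U by simp
qed

end
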